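(* Let $N\ge1$, $M=2^N$, and let $\mathcal{A}=\{a_0,\dots,a_{M-1}\}\subset\mathbb{C}$ be a constellation with an arbitrary labelling (in particular, not necessarily a Gray labelling). Suppose there is a family of rectangles in $\mathbb{C}$, each having four points of $\mathcal{A}$ as its vertices, such that: (1) the vertices of these rectangles cover all points of $\mathcal{A}$; (2) no two rectangles share a vertex; (3) in each rectangle, the labels of the two points of one diagonal pair both contain an odd number of $0$s in their $N$-bit binary representations and the labels of the two points of the other diagonal pair both contain an even number of $0$s. Then for all $y,h\in\mathbb{C}$, with $d_i=|y-ha_i|^2$, the coefficient $\bar d_{\{0,\dots,N-1\}}$ of the monomial $\prod_{n=0}^{N-1}z_n$ in the associated pseudo-Boolean function $f$ is zero.
   Context: For $i\in\{0,\dots,M-1\}$ write its $N$-bit binary representation as $b_0(i)\cdots b_{N-1}(i)$ with $b_0$ the most significant bit; this bit string is the label of $a_i$. Given $d_0,\dots,d_{M-1}$, define $f(z_0,\dots,z_{N-1})=\sum_{i}d_i\prod_{n=0}^{N-1}B_{i,n}(z_n)$, $z_n\in\{0,1\}$, with $B_{i,n}(z)=z$ if $b_n(i)=1$ and $1-z$ if $b_n(i)=0$. Its multilinear expansion is $f=\sum_{S\subseteq\{0,\dots,N-1\}}\bar d_S\prod_{n\in S}z_n$ with $\bar d_S=\sum_{i:\,b_n(i)=0\ \forall n\notin S}d_i\prod_{n\in S}(-1)^{1-b_n(i)}$. *)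

theory Defs
  imports Complex_Main
begin

text \<open>Bit n (n = 0 is the most significant bit) of the N-bit label of index i.\<close>
definition lbit :: "nat \<Rightarrow> nat \<Rightarrow> nat \<Rightarrow> bool" where
  "lbit N i n = bit i (N - 1 - n)"

definition num_zeros :: "nat \<Rightarrow> nat \<Rightarrow> nat" where
  "num_zeros N i = card {n. n < N \<and> \<not> lbit N i n}"

text \<open>Multilinear coefficient of the monomial prod_{n in S} z_n.\<close>
definition dbar :: "nat \<Rightarrow> (nat \<Rightarrow> real) \<Rightarrow> nat set \<Rightarrow> real" where
  "dbar N d S = (\<Sum>i\<in>{i. i < 2^N \<and> (\<forall>n<N. n \<notin> S \<longrightarrow> \<not> lbit N i n)}.
      d i * (\<Prod>n\<in>S. (if lbit N i n then 1 else -1)))"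

definition pbf :: "nat \<Rightarrow> (nat \<Rightarrow> real) \<Rightarrow> (nat \<Rightarrow> real) \<Rightarrow> real" where
  "pbf N d z = (\<Sum>i<2^N. d i * (\<Prod>n<N. if lbit N i n then z n else 1 - z n))"

text \<open>p, q, r, s (in cyclic order) are the vertices of a (non-degenerate) rectangle:
  four distinct points, opposite sides parallel and equal, right angle at p.
  Its diagonals are (p,r) and (q,s).\<close>
definition is_rectangle :: "complex \<Rightarrow> complex \<Rightarrow> complex \<Rightarrow> complex \<Rightarrow> bool" where
  "is_rectangle p q r s \<longleftrightarrow> distinct [p, q, r, s] \<and> q - p = r - s \<and>
     Re ((q - p) * cnj (s - p)) = 0"

end

theory Submission
  imports Defs
begin

lemma flag:
  fixes P Q R S y h :: complex
  assumes "Q - P = R - S" "Re ((Q - P) * cnj (S - P)) = 0"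
  shows "(cmod (y - h * P))\<^sup>2 + (cmod (y - h * R))\<^sup>2 = (cmod (y - h * Q))\<^sup>2 + (cmod (y - h * S))\<^sup>2"
proof -
  have R: "R = Q - P + S" using assms(1) by (simp add: algebra_simps)
  have e: "(Re Q - Re P) * (Re S - Re P) + (Im Q - Im P) * (Im S - Im P) = 0"
    using assms(2) by (simp add: algebra_simps)
  have "(cmod (y - h * P))\<^sup>2 + (cmod (y - h * R))\<^sup>2 - ((cmod (y - h * Q))\<^sup>2 + (cmod (y - h * S))\<^sup>2)
     = 2 * ((Re h)\<^sup>2 + (Im h)\<^sup>2) * ((Re Q - Re P) * (Re S - Re P) + (Im Q - Im P) * (Im S - Im P))"
    unfolding R cmod_power2 by (simp add: algebra_simps power2_eq_square)
  then show ?thesis unfolding e by (metis right_minus_eq mult_zero_right)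
qed

lemma sg: "(\<Prod>n<N. if lbit N i n then (1::real) else -1) = (-1) ^ num_zeros N i"
proof -
  have "(\<Prod>n<N. if lbit N i n then (1::real) else -1)
      = (\<Prod>n\<in>{..<N} \<inter> {n. lbit N i n}. 1) * (\<Prod>n\<in>{..<N} \<inter> - {n. lbit N i n}. (-1::real))"
    by (rule prod.If_cases) simp
  also have "\<dots> = (-1) ^ card ({..<N} \<inter> - {n. lbit N i n})" by simp
  also have "{..<N} \<inter> - {n. lbit N i n} = {n. n < N \<and> \<not> lbit N i n}" by auto
  finally show ?thesis unfolding num_zeros_def .
qed

theorem corollary1:
  fixes N :: nat and a :: "nat \<Rightarrow> complex" and R :: "nat set set" and y h :: complex
  assumes "N \<ge> 1"
    and "inj_on a {..<2^N}"
    and "\<forall>Q\<in>R. \<exists>p q r s. Q = {p, q, r, s} \<and> is_rectangle (a p) (a q) (a r) (a s) \<and>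
           ((odd (num_zeros N p) \<and> odd (num_zeros N r) \<and> even (num_zeros N q) \<and> even (num_zeros N s)) \<or>
            (even (num_zeros N p) \<and> even (num_zeros N r) \<and> odd (num_zeros N q) \<and> odd (num_zeros N s)))"
    and "\<Union>R = {..<2^N}"
    and "pairwise disjnt R"
  shows "dbar N (\<lambda>i. (cmod (y - h * a i))\<^sup>2) {0..<N} = 0"
proof -
  define d where "d = (\<lambda>i. (cmod (y - h * a i))\<^sup>2)"
  define g where "g = (\<lambda>i. d i * (-1::real) ^ num_zeros N i)"
  have set: "{i. i < 2^N \<and> (\<forall>n<N. n \<notin> {0..<N} \<longrightarrow> \<not> lbit N i n)} = \<Union>R"
    using assms(4) by auto
  have "dbar N d {0..<N} = (\<Sum>i\<in>\<Union>R. g i)"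
    unfolding dbar_def set g_def
    by (rule sum.cong) (simp_all add: atLeast0LessThan sg)
  also have "\<dots> = (\<Sum>Q\<in>R. \<Sum>i\<in>Q. g i)"
  proof -
    have f: "\<forall>A\<in>R. finite A"
    proof
      fix A assume "A \<in> R"
      then have "A \<subseteq> {..<2^N}" using assms(4) by blast
      then show "finite A" by (rule finite_subset) simp
    qed
    have di: "\<forall>A\<in>R. \<forall>B\<in>R. A \<noteq> B \<longrightarrow> A \<inter> B = {}"
      using assms(5) unfolding pairwise_def disjnt_def by blast
    show ?thesis using sum.Union_disjoint[OF f di, of g] by (simp add: comp_def)
  qed
  also have "\<dots> = 0"
  proof (rule sum.neutral, rule ballI)
    fix Q assume "Q \<in> R"
    from bspec[OF assms(3) this] obtain p q r s where Q: "Q = {p, q, r, s}" and rect: "is_rectangle (a p) (a q) (a r) (a s)"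
      and par: "(odd (num_zeros N p) \<and> odd (num_zeros N r) \<and> even (num_zeros N q) \<and> even (num_zeros N s)) \<or>
            (even (num_zeros N p) \<and> even (num_zeros N r) \<and> odd (num_zeros N q) \<and> odd (num_zeros N s))"
      by (elim exE conjE) (rule that; assumption)
    from rect have dl: "distinct [a p, a q, a r, a s]" and r1: "a q - a p = a r - a s"
      and r2: "Re ((a q - a p) * cnj (a s - a p)) = 0"
      unfolding is_rectangle_def by blast+
    from dl have dist: "p \<noteq> q" "p \<noteq> r" "p \<noteq> s" "q \<noteq> r" "q \<noteq> s" "r \<noteq> s"
      by auto
    have fl: "d p + d r = d q + d s"
      unfolding d_def by (rule flag[OF r1 r2])
    have "(\<Sum>i\<in>Q. g i) = g p + g q + g r + g s" unfolding Q using dist by simp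
    also have "\<dots> = 0" using par
    proof
      assume h: "odd (num_zeros N p) \<and> odd (num_zeros N r) \<and> even (num_zeros N q) \<and> even (num_zeros N s)"
      then show ?thesis unfolding g_def using fl by simp
    next
      assume h: "even (num_zeros N p) \<and> even (num_zeros N r) \<and> odd (num_zeros N q) \<and> odd (num_zeros N s)"
      then show ?thesis unfolding g_def using fl by simp
    qed
    finally show "(\<Sum>i\<in>Q. g i) = 0" .
  qed
  finally show ?thesis unfolding d_def .
qed

end
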